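(* Let $T\ge1$, $R\ge 1$, let $\kappa_1,\dots,\kappa_R\ge 0$, let $0<\omega_1\le\cdots\le\omega_R$, and let $d_1,\dots,d_T\ge 0$ be real numbers. For $\theta\ge 0$ define $$\tilde Z_j(\theta)=\sum_{r=1}^R\kappa_r\cos(\omega_r\theta d_j),\qquad \tilde A_j(\theta)=\frac{\exp(\tilde Z_j(\theta))}{\sum_{j'=1}^T\exp(\tilde Z_{j'}(\theta))},\quad j\in[T].$$ Let $S\subseteq[T]$, $F=[T]\setminus S$, assume $d_i\le d_j$ for all $i\in S$, $j\in F$, and let $M_S(\theta)=\sum_{i\in S}\tilde A_i(\theta)$. Let $d_{\max}=\max_j d_j$ and $\omega_{\max}=\max_r\omega_r=\omega_R$. Then for every $\theta$ with $0\le \theta\le \pi/(2\omega_{\max}d_{\max})$ (any $\theta\ge0$ if $d_{\max}=0$), $$\frac{d}{d\theta}M_S(\theta)\ge 0.$$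
   Context: $[T]=\{1,\dots,T\}$. This is a reduced-form (coherent-band) model of rotary positional encoding (RoPE) in one cross-attention row: $d_j=\tilde l-j$ is the relative distance of history position $j$ from the current decoder position, $\theta$ is the overall rotary scale, and $S$ is the set of "near" positions. *)

theory Defs
  imports "HOL-Analysis.Analysis"
begin

definition Ztil :: "nat \<Rightarrow> (nat \<Rightarrow> real) \<Rightarrow> (nat \<Rightarrow> real) \<Rightarrow> (nat \<Rightarrow> real) \<Rightarrow> nat \<Rightarrow> real \<Rightarrow> real" where
  "Ztil R \<kappa> \<omega> d j \<theta> = (\<Sum>r=1..R. \<kappa> r * cos (\<omega> r * \<theta> * d j))"

definition Atil :: "nat \<Rightarrow> nat \<Rightarrow> (nat \<Rightarrow> real) \<Rightarrow> (nat \<Rightarrow> real) \<Rightarrow> (nat \<Rightarrow> real) \<Rightarrow> nat \<Rightarrow> real \<Rightarrow> real" where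
  "Atil T R \<kappa> \<omega> d j \<theta> =
     exp (Ztil R \<kappa> \<omega> d j \<theta>) / (\<Sum>j'=1..T. exp (Ztil R \<kappa> \<omega> d j' \<theta>))"

definition MS :: "nat \<Rightarrow> nat \<Rightarrow> (nat \<Rightarrow> real) \<Rightarrow> (nat \<Rightarrow> real) \<Rightarrow> (nat \<Rightarrow> real) \<Rightarrow> nat set \<Rightarrow> real \<Rightarrow> real" where
  "MS T R \<kappa> \<omega> d S \<theta> = (\<Sum>i\<in>S. Atil T R \<kappa> \<omega> d i \<theta>)"

end

theory Submission
  imports Defs
begin
lemma aux_mono:
  fixes a b c :: real
  assumes "0 \<le> a" "a \<le> b" "0 \<le> c" "c * b \<le> pi/2"
  shows "a * sin (c * a) \<le> b * sin (c * b)"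
proof -
  have ca: "c * a \<le> c * b" using assms by (simp add: mult_left_mono)
  have s1: "sin (c * a) \<le> sin (c * b)"
    by (rule sin_monotone_2pi_le) (use assms ca in \<open>auto intro: order_trans[of _ 0] simp: zero_le_mult_iff\<close>)
  have s0: "0 \<le> sin (c * a)"
  proof (rule sin_ge_zero)
    show "0 \<le> c * a" using assms by simp
    show "c * a \<le> pi" using assms ca pi_gt_zero by linarith
  qed
  show ?thesis using mult_mono[OF assms(2) s1] s0 assms by linarith
qed

lemma Z_deriv:
  "((\<lambda>t. Ztil R \<kappa> \<omega> d j t) has_real_derivative
     - (\<Sum>r=1..R. \<kappa> r * \<omega> r * d j * sin (\<omega> r * \<theta> * d j))) (at \<theta>)"
proof -
  have "((\<lambda>t. Ztil R \<kappa> \<omega> d j t) has_real_derivative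
     (\<Sum>r=1..R. \<kappa> r * (- sin (\<omega> r * \<theta> * d j) * (\<omega> r * d j)))) (at \<theta>)"
    unfolding Ztil_def
    by (auto intro!: derivative_eq_intros sum.cong simp: algebra_simps)
  moreover have "(\<Sum>r=1..R. \<kappa> r * (- sin (\<omega> r * \<theta> * d j) * (\<omega> r * d j)))
     = - (\<Sum>r=1..R. \<kappa> r * \<omega> r * d j * sin (\<omega> r * \<theta> * d j))"
    by (simp add: sum_negf[symmetric] algebra_simps)
  ultimately show ?thesis by simp
qed

theorem mainTheorem2:
  fixes T R :: nat and \<kappa> \<omega> d :: "nat \<Rightarrow> real" and S :: "nat set" and \<theta> :: real
  assumes T1: "T \<ge> 1" and R1: "R \<ge> 1"
    and kappa_nonneg: "\<And>r. r \<in> {1..R} \<Longrightarrow> \<kappa> r \<ge> 0"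
    and omega_pos: "\<omega> 1 > 0"
    and omega_mono: "\<And>r r'. 1 \<le> r \<Longrightarrow> r \<le> r' \<Longrightarrow> r' \<le> R \<Longrightarrow> \<omega> r \<le> \<omega> r'"
    and d_nonneg: "\<And>j. j \<in> {1..T} \<Longrightarrow> d j \<ge> 0"
    and S_sub: "S \<subseteq> {1..T}"
    and near: "\<And>i j. i \<in> S \<Longrightarrow> j \<in> {1..T} - S \<Longrightarrow> d i \<le> d j"
    and theta_nonneg: "0 \<le> \<theta>"
    and theta_le: "Max (d ` {1..T}) \<noteq> 0 \<Longrightarrow> \<theta> \<le> pi / (2 * \<omega> R * Max (d ` {1..T}))"
  shows "\<exists>D. ((\<lambda>t. MS T R \<kappa> \<omega> d S t) has_real_derivative D) (at \<theta>) \<and> D \<ge> 0"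
proof -
  define Dm where "Dm = Max (d ` {1..T})"
  define g where "g j = - (\<Sum>r=1..R. \<kappa> r * \<omega> r * d j * sin (\<omega> r * \<theta> * d j))" for j
  define E where "E j t = exp (Ztil R \<kappa> \<omega> d j t)" for j t
  define N where "N t = (\<Sum>i\<in>S. E i t)" for t
  define Zs where "Zs t = (\<Sum>j=1..T. E j t)" for t
  define F where "F = {1..T} - S"
  have bound: "\<omega> r * \<theta> * d j \<le> pi/2" if r: "r \<in> {1..R}" and j: "j \<in> {1..T}" for r j
  proof -
    have dj: "0 \<le> d j" "d j \<le> Dm" using d_nonneg[OF j] j unfolding Dm_def by auto
    have wr: "0 < \<omega> r" "\<omega> r \<le> \<omega> R"
      using omega_mono[of 1 r] omega_mono[of r R] omega_pos r by auto
    show ?thesis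
    proof (cases "Dm = 0")
      case True
      then have "d j = 0" using dj by simp
      then show ?thesis by simp
    next
      case False
      then have Dpos: "Dm > 0" using dj by simp
      have "\<theta> \<le> pi / (2 * \<omega> R * Dm)" using theta_le False unfolding Dm_def by simp
      then have th: "\<theta> * (2 * \<omega> R * Dm) \<le> pi"
        using Dpos wr by (simp add: pos_le_divide_eq)
      have "\<omega> r * \<theta> * d j \<le> \<omega> R * \<theta> * Dm"
        using wr dj theta_nonneg by (intro mult_mono) (auto intro: mult_right_mono)
      then show ?thesis using th by (simp add: algebra_simps)
    qed
  qed
  have gmono: "g j \<le> g i" if i: "i \<in> S" and j: "j \<in> F" for i j
  proof -
    have ij: "i \<in> {1..T}" "j \<in> {1..T}" using i j S_sub F_def by auto
    have "(\<Sum>r=1..R. \<kappa> r * \<omega> r * d i * sin (\<omega> r * \<theta> * d i))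
        \<le> (\<Sum>r=1..R. \<kappa> r * \<omega> r * d j * sin (\<omega> r * \<theta> * d j))"
    proof (rule sum_mono)
      fix r assume r: "r \<in> {1..R}"
      have wr: "0 < \<omega> r" using omega_mono[of 1 r] omega_pos r by auto
      have "d i * sin ((\<omega> r * \<theta>) * d i) \<le> d j * sin ((\<omega> r * \<theta>) * d j)"
        using aux_mono[of "d i" "d j" "\<omega> r * \<theta>"] d_nonneg[OF ij(1)] near[OF i] j F_def
          bound[OF r ij(2)] wr theta_nonneg by auto
      then have "(\<kappa> r * \<omega> r) * (d i * sin (\<omega> r * \<theta> * d i)) \<le> (\<kappa> r * \<omega> r) * (d j * sin (\<omega> r * \<theta> * d j))"
        using kappa_nonneg[OF r] wr by (intro mult_left_mono) auto
      then show "\<kappa> r * \<omega> r * d i * sin (\<omega> r * \<theta> * d i) \<le> \<kappa> r * \<omega> r * d j * sin (\<omega> r * \<theta> * d j)"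
        by (simp add: algebra_simps)
    qed
    then show ?thesis unfolding g_def by simp
  qed
  have Ed: "((\<lambda>t. E j t) has_real_derivative E j \<theta> * g j) (at \<theta>)" for j
    unfolding E_def g_def by (rule DERIV_fun_exp[OF Z_deriv])
  have Nd: "(N has_real_derivative (\<Sum>i\<in>S. E i \<theta> * g i)) (at \<theta>)"
    unfolding N_def[abs_def] by (rule DERIV_sum, rule Ed)
  have Zd: "(Zs has_real_derivative (\<Sum>j=1..T. E j \<theta> * g j)) (at \<theta>)"
    unfolding Zs_def[abs_def] by (rule DERIV_sum, rule Ed)
  have Epos: "E j t > 0" for j t unfolding E_def by simp
  have Zpos: "Zs \<theta> > 0" unfolding Zs_def using T1 Epos by (intro sum_pos) auto
  have MSeq: "(\<lambda>t. MS T R \<kappa> \<omega> d S t) = (\<lambda>t. N t / Zs t)"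
    unfolding MS_def Atil_def N_def Zs_def E_def by (simp add: sum_divide_distrib)
  have D: "((\<lambda>t. MS T R \<kappa> \<omega> d S t) has_real_derivative
      ((\<Sum>i\<in>S. E i \<theta> * g i) * Zs \<theta> - (\<Sum>j=1..T. E j \<theta> * g j) * N \<theta>) / (Zs \<theta> ^ Suc (Suc 0))) (at \<theta>)"
    unfolding MSeq using DERIV_quotient[OF Nd Zd] Zpos by simp
  have fin: "finite {1..T}" by simp
  have split1: "Zs \<theta> = (\<Sum>j\<in>F. E j \<theta>) + N \<theta>"
    unfolding Zs_def N_def F_def by (rule sum.subset_diff[OF S_sub fin])
  have split2: "(\<Sum>j=1..T. E j \<theta> * g j) = (\<Sum>j\<in>F. E j \<theta> * g j) + (\<Sum>i\<in>S. E i \<theta> * g i)"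
    unfolding F_def by (rule sum.subset_diff[OF S_sub fin])
  have "(\<Sum>i\<in>S. E i \<theta> * g i) * Zs \<theta> - (\<Sum>j=1..T. E j \<theta> * g j) * N \<theta>
      = (\<Sum>i\<in>S. E i \<theta> * g i) * (\<Sum>j\<in>F. E j \<theta>) - (\<Sum>j\<in>F. E j \<theta> * g j) * N \<theta>"
    unfolding split1 split2 by (simp add: algebra_simps)
  also have "\<dots> = (\<Sum>i\<in>S. \<Sum>j\<in>F. E i \<theta> * E j \<theta> * (g i - g j))"
  proof -
    have A: "(\<Sum>i\<in>S. E i \<theta> * g i) * (\<Sum>j\<in>F. E j \<theta>) = (\<Sum>i\<in>S. \<Sum>j\<in>F. E i \<theta> * g i * E j \<theta>)"
      by (rule sum_product)
    have "(\<Sum>j\<in>F. E j \<theta> * g j) * N \<theta> = (\<Sum>j\<in>F. \<Sum>i\<in>S. E j \<theta> * g j * E i \<theta>)"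
      unfolding N_def by (rule sum_product)
    also have "\<dots> = (\<Sum>i\<in>S. \<Sum>j\<in>F. E j \<theta> * g j * E i \<theta>)"
      by (rule sum.swap)
    finally have B: "(\<Sum>j\<in>F. E j \<theta> * g j) * N \<theta> = (\<Sum>i\<in>S. \<Sum>j\<in>F. E j \<theta> * g j * E i \<theta>)" .
    show ?thesis unfolding A B
      by (simp add: sum_subtractf[symmetric] algebra_simps)
  qed
  also have "\<dots> \<ge> 0"
    using gmono Epos by (intro sum_nonneg) (simp add: less_imp_le)
  finally show ?thesis using D Zpos by (intro exI[of _ "_ / _"]) (auto intro!: divide_nonneg_pos)
qed

end
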